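(* Let $k\ge1$, $t\ge 0$ and $n\ge kt$ be integers. Then $S(n,t,k)=k^t$. Moreover, if $F$ is a $t$-admissible $k$-CNF formula on $n$ variables with $|\mathrm{sat}_t(F)|=k^t$, then $F$ contains $t$ pairwise variable-disjoint clauses each of the form $(x_{i_1}\lor\dots\lor x_{i_k})$, i.e. consisting of $k$ distinct un-negated variables.
   Context: A $k$-CNF formula is a conjunction of clauses (disjunctions of literals) each of width at most $k$. $\mathrm{sat}_t(F)$ is the set of satisfying assignments of $F$ of Hamming weight exactly $t$. $F$ is $t$-admissible if it has no satisfying assignment of Hamming weight less than $t$. $S(n,t,k)$ is the maximum of $|\mathrm{sat}_t(F)|$ over all $t$-admissible $k$-CNF formulas $F$ on $n$ variables. *)

theory Defs
  imports Main
begin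

text \<open>Variables are natural numbers; a formula on n variables uses only variables 0..n-1.
  A literal is a pair (v, b): b = True means the un-negated variable x_v, b = False means its negation. An assignment of the n variables is identified with the set of variables set
  to true, so its Hamming weight is its cardinality.\<close>

type_synonym literal = "nat \<times> bool"
type_synonym clause = "literal set"
type_synonym cnf = "clause set"

definition sat_clause :: "nat set \<Rightarrow> clause \<Rightarrow> bool" where
  "sat_clause A C \<longleftrightarrow> (\<exists>(v, b)\<in>C. (v \<in> A) = b)"

definition sat_cnf :: "nat set \<Rightarrow> cnf \<Rightarrow> bool" where
  "sat_cnf A F \<longleftrightarrow> (\<forall>C\<in>F. sat_clause A C)"

definition cnf_on :: "nat \<Rightarrow> cnf \<Rightarrow> bool" where
  "cnf_on n F \<longleftrightarrow> finite F \<and> (\<forall>C\<in>F. finite C \<and> (\<forall>(v, b)\<in>C. v < n))"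

definition is_kcnf :: "nat \<Rightarrow> cnf \<Rightarrow> bool" where
  "is_kcnf k F \<longleftrightarrow> (\<forall>C\<in>F. card C \<le> k)"

definition sat_w :: "nat \<Rightarrow> nat \<Rightarrow> cnf \<Rightarrow> nat set set" where
  "sat_w n t F = {A. A \<subseteq> {0..<n} \<and> card A = t \<and> sat_cnf A F}"

definition admissible :: "nat \<Rightarrow> nat \<Rightarrow> cnf \<Rightarrow> bool" where
  "admissible n t F \<longleftrightarrow> (\<forall>A. A \<subseteq> {0..<n} \<and> card A < t \<longrightarrow> \<not> sat_cnf A F)"

definition S :: "nat \<Rightarrow> nat \<Rightarrow> nat \<Rightarrow> nat" where
  "S n t k = Max {card (sat_w n t F) | F. cnf_on n F \<and> is_kcnf k F \<and> admissible n t F}"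

end

theory Submission
  imports Defs "HOL-Library.FuncSet"
begin

definition Sol :: "nat \<Rightarrow> cnf \<Rightarrow> nat set \<Rightarrow> nat \<Rightarrow> nat set set" where
  "Sol n F B s = {A. B \<subseteq> A \<and> A \<subseteq> {0..<n} \<and> card A = card B + s \<and> sat_cnf A F}"

definition adm :: "nat \<Rightarrow> cnf \<Rightarrow> nat set \<Rightarrow> nat \<Rightarrow> bool" where
  "adm n F B s \<longleftrightarrow> (\<forall>A. B \<subseteq> A \<and> A \<subseteq> {0..<n} \<and> card A < card B + s \<longrightarrow> \<not> sat_cnf A F)"

lemma finite_Sol: "finite (Sol n F B s)"
proof -
  have "Sol n F B s \<subseteq> Pow {0..<n}" unfolding Sol_def by auto
  thus ?thesis by (rule finite_subset) auto
qed

lemma branch: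
  assumes "C \<in> F" "\<not> sat_clause B C" "finite B"
  shows "Sol n F B (Suc s) \<subseteq> (\<Union>x\<in>{x. (x,True)\<in>C} - B. Sol n F (insert x B) s)"
proof
  fix A assume A: "A \<in> Sol n F B (Suc s)"
  hence "sat_clause A C" using assms(1) unfolding Sol_def sat_cnf_def by auto
  then obtain x b where xb: "(x,b) \<in> C" "(x \<in> A) = b" unfolding sat_clause_def by auto
  have nb: "(x \<in> B) \<noteq> b" using xb(1) assms(2) unfolding sat_clause_def by auto
  have BA: "B \<subseteq> A" using A unfolding Sol_def by auto
  have b using xb nb BA by auto
  hence "x \<in> A" "x \<notin> B" using xb nb by auto
  hence "A \<in> Sol n F (insert x B) s" using A assms(3) unfolding Sol_def by auto
  thus "A \<in> (\<Union>x\<in>{x. (x,True)\<in>C} - B. Sol n F (insert x B) s)"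
    using \<open>b\<close> xb \<open>x \<notin> B\<close> by auto
qed

lemma adm_step:
  assumes "adm n F B (Suc s)" "x \<notin> B" "finite B"
  shows "adm n F (insert x B) s"
  unfolding adm_def
proof (intro allI impI)
  fix A assume A: "insert x B \<subseteq> A \<and> A \<subseteq> {0..<n} \<and> card A < card (insert x B) + s"
  have "card (insert x B) = Suc (card B)" using assms(2,3) by simp
  hence "B \<subseteq> A \<and> A \<subseteq> {0..<n} \<and> card A < card B + Suc s" using A by auto
  thus "\<not> sat_cnf A F" using assms(1) unfolding adm_def by blast
qed

lemma adm_clause:
  assumes "adm n F B (Suc s)" "B \<subseteq> {0..<n}"
  obtains C where "C \<in> F" "\<not> sat_clause B C"
proof -
  have "\<not> sat_cnf B F" using assms unfolding adm_def by auto
  thus ?thesis using that unfolding sat_cnf_def by blast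
qed

lemma posvars:
  assumes "cnf_on n F" "C \<in> F" "is_kcnf k F"
  shows "finite ({x. (x,True)\<in>C} - B)" "card ({x. (x,True)\<in>C} - B) \<le> k"
    "{x. (x,True)\<in>C} - B \<subseteq> {0..<n}"
proof -
  have fC: "finite C" using assms unfolding cnf_on_def by auto
  have sub: "(\<lambda>v. (v,True)) ` ({x. (x,True)\<in>C} - B) \<subseteq> C" by auto
  have inj: "inj_on (\<lambda>v. (v,True)) X" for X by (auto simp: inj_on_def)
  show "finite ({x. (x,True)\<in>C} - B)"
    using finite_imageD[OF finite_subset[OF sub fC] inj] .
  have "card ({x. (x,True)\<in>C} - B) = card ((\<lambda>v. (v,True)) ` ({x. (x,True)\<in>C} - B))"
    by (rule card_image[OF inj, symmetric])
  also have "\<dots> \<le> card C" using card_mono[OF fC sub] .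
  also have "\<dots> \<le> k" using assms unfolding is_kcnf_def by auto
  finally show "card ({x. (x,True)\<in>C} - B) \<le> k" .
  show "{x. (x,True)\<in>C} - B \<subseteq> {0..<n}" using assms unfolding cnf_on_def by fastforce
qed

lemma bound:
  assumes "cnf_on n F" "is_kcnf k F"
  shows "B \<subseteq> {0..<n} \<Longrightarrow> adm n F B s \<Longrightarrow> card (Sol n F B s) \<le> k ^ s"
proof (induction s arbitrary: B)
  case 0
  have "Sol n F B 0 \<subseteq> {B}"
  proof
    fix A assume "A \<in> Sol n F B 0"
    hence "B \<subseteq> A" "A \<subseteq> {0..<n}" "card A = card B" unfolding Sol_def by auto
    hence "A = B" by (metis card_subset_eq finite_atLeastLessThan finite_subset)
    thus "A \<in> {B}" by simp
  qed
  hence "card (Sol n F B 0) \<le> card {B}" by (intro card_mono) auto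
  thus ?case by simp
next
  case (Suc s)
  obtain C where C: "C \<in> F" "\<not> sat_clause B C" using adm_clause[OF Suc.prems(2,1)] by blast
  define P where "P = {x. (x,True)\<in>C} - B"
  have fB: "finite B" using Suc.prems(1) finite_subset by blast
  note pv = posvars[OF assms(1) C(1) assms(2), of B, folded P_def]
  have "card (Sol n F B (Suc s)) \<le> card (\<Union>x\<in>P. Sol n F (insert x B) s)"
    using branch[OF C fB, of n s] unfolding P_def[symmetric]
    by (intro card_mono) (auto intro: finite_Sol simp: pv(1))
  also have "\<dots> \<le> (\<Sum>x\<in>P. card (Sol n F (insert x B) s))" by (rule card_UN_le[OF pv(1)])
  also have "\<dots> \<le> (\<Sum>x\<in>P. k ^ s)"
  proof (rule sum_mono)
    fix x assume "x \<in> P"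
    hence "x \<notin> B" "insert x B \<subseteq> {0..<n}" using pv(3) Suc.prems(1) P_def by auto
    thus "card (Sol n F (insert x B) s) \<le> k ^ s"
      using Suc.IH adm_step[OF Suc.prems(2) _ fB] by blast
  qed
  also have "\<dots> = card P * k ^ s" by simp
  also have "\<dots> \<le> k ^ Suc s" using pv(2) by simp
  finally show ?case .
qed

lemma card_mono_eq: "finite Y \<Longrightarrow> X \<subseteq> Y \<Longrightarrow> card X = m \<Longrightarrow> m \<le> card Y"
  using card_mono by blast

lemma arith_aux:
  fixes j m :: nat assumes "m > 0"
  shows "j * m + j * (Suc j * m) < Suc j * (Suc j * m)"
proof -
  have "j * m + j * (Suc j * m) = (j * j + 2 * j) * m" by (simp add: algebra_simps)
  also have "\<dots> < (j * j + 2 * j + 1) * m" using assms by simp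
  also have "\<dots> = Suc j * (Suc j * m)" by (simp add: algebra_simps)
  finally show ?thesis .
qed

lemma eq_case:
  assumes "cnf_on n F" "is_kcnf k F" "k \<ge> 1"
  shows "B \<subseteq> {0..<n} \<Longrightarrow> adm n F B s \<Longrightarrow> card (Sol n F B s) = k ^ s \<Longrightarrow>
    \<exists>V :: nat \<Rightarrow> nat set.
         (\<forall>i<s. card (V i) = k \<and> (\<lambda>v. (v, True)) ` V i \<in> F \<and> V i \<inter> B = {}) \<and>
         (\<forall>i<s. \<forall>j<s. i \<noteq> j \<longrightarrow> V i \<inter> V j = {})"
proof (induction s arbitrary: B)
  case 0
  show ?case by auto
next
  case (Suc s)
  obtain C where C: "C \<in> F" "\<not> sat_clause B C" using adm_clause[OF Suc.prems(2,1)] by blast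
  define P where "P = {x. (x,True)\<in>C} - B"
  have fB: "finite B" using Suc.prems(1) finite_subset by blast
  note pv = posvars[OF assms(1) C(1) assms(2), of B, folded P_def]
  have PB: "P \<inter> B = {}" unfolding P_def by auto
  have kpos: "k ^ s > 0" using assms(3) by simp
  have ins: "x \<notin> B" "insert x B \<subseteq> {0..<n}" "adm n F (insert x B) s"
    "card (insert x B) = Suc (card B)" if "x \<in> P" for x
    using that pv(3) Suc.prems(1) P_def adm_step[OF Suc.prems(2) _ fB] fB by auto
  have bnd: "card (Sol n F (insert x B) s) \<le> k ^ s" if "x \<in> P" for x
    using bound[OF assms(1,2)] ins[OF that] by blast
  have cov: "Sol n F B (Suc s) \<subseteq> (\<Union>x\<in>P. Sol n F (insert x B) s)"
    using branch[OF C fB, of n s] unfolding P_def[symmetric] .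
  have "k ^ Suc s \<le> card (\<Union>x\<in>P. Sol n F (insert x B) s)"
    using pv(1) finite_Sol by (intro card_mono_eq[OF _ cov Suc.prems(3)]) auto
  also have "\<dots> \<le> (\<Sum>x\<in>P. card (Sol n F (insert x B) s))" by (rule card_UN_le[OF pv(1)])
  also have "\<dots> \<le> (\<Sum>x\<in>P. k ^ s)" using bnd by (rule sum_mono)
  also have "\<dots> = card P * k ^ s" by simp
  finally have "k * k ^ s \<le> card P * k ^ s" by simp
  hence "k \<le> card P" using kpos by (meson mult_le_cancel2 zero_less_iff_neq_zero)
  hence cP: "card P = k" using pv(2) by simp
  have inj: "inj_on (\<lambda>v. (v,True)) X" for X by (auto simp: inj_on_def)
  have fC: "finite C" using assms(1) C(1) unfolding cnf_on_def by auto
  have sub: "(\<lambda>v. (v,True)) ` P \<subseteq> C" unfolding P_def by auto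
  have "card C \<le> k" using assms(2) C(1) unfolding is_kcnf_def by auto
  moreover have "card ((\<lambda>v. (v,True)) ` P) = k" using card_image[OF inj, of P] cP by simp
  ultimately have CP: "(\<lambda>v. (v,True)) ` P = C"
    using card_subset_eq[OF fC sub] card_mono[OF fC sub] by simp
  have "P \<noteq> {}" using cP assms(3) by auto
  then obtain v where vP: "v \<in> P" by blast
  have cov2: "Sol n F B (Suc s) \<subseteq> Sol n F (insert v B) s \<union> (\<Union>x\<in>P - {v}. Sol n F (insert x B) s)"
    using cov vP by blast
  have fPv: "finite (P - {v})" using pv(1) by simp
  have cPv: "card (P - {v}) = k - 1" using cP vP pv(1) by simp
  have rest: "card (\<Union>x\<in>P - {v}. Sol n F (insert x B) s) \<le> (k - 1) * k ^ s"
  proof -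
    have "card (\<Union>x\<in>P - {v}. Sol n F (insert x B) s) \<le> (\<Sum>x\<in>P - {v}. card (Sol n F (insert x B) s))"
      by (rule card_UN_le[OF fPv])
    also have "\<dots> \<le> (\<Sum>x\<in>P - {v}. k ^ s)" using bnd by (intro sum_mono) auto
    also have "\<dots> = (k - 1) * k ^ s" using cPv by simp
    finally show ?thesis .
  qed
  have fU: "finite (\<Union>x\<in>P - {v}. Sol n F (insert x B) s)" using fPv finite_Sol by blast
  have "k ^ Suc s \<le> card (Sol n F (insert v B) s \<union> (\<Union>x\<in>P - {v}. Sol n F (insert x B) s))"
    using fU finite_Sol by (intro card_mono_eq[OF _ cov2 Suc.prems(3)]) auto
  also have "\<dots> \<le> card (Sol n F (insert v B) s) + card (\<Union>x\<in>P - {v}. Sol n F (insert x B) s)"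
    by (rule card_Un_le)
  finally have "k * k ^ s \<le> card (Sol n F (insert v B) s) + (k - 1) * k ^ s" using rest by simp
  moreover have "k * k ^ s = (k - 1) * k ^ s + k ^ s" using assms(3)
    by (cases k) auto
  ultimately have "k ^ s \<le> card (Sol n F (insert v B) s)" by linarith
  hence tight: "card (Sol n F (insert v B) s) = k ^ s" using bnd[OF vP] by simp
  obtain V where V: "\<forall>i<s. card (V i) = k \<and> (\<lambda>v. (v, True)) ` V i \<in> F \<and> V i \<inter> insert v B = {}"
    "\<forall>i<s. \<forall>j<s. i \<noteq> j \<longrightarrow> V i \<inter> V j = {}"
    using Suc.IH[OF ins(2,3)[OF vP] tight] by blast
  have VP: "V i \<inter> P = {}" if "i < s" for i
  proof (rule ccontr)
    assume "V i \<inter> P \<noteq> {}"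
    then obtain u where u: "u \<in> V i" "u \<in> P" by blast
    have uv: "u \<noteq> v" using V(1) that u(1) by auto
    obtain s' where s': "s = Suc s'" using \<open>i < s\<close> by (cases s) auto
    define N where "N = {A \<in> Sol n F (insert v B) s. u \<notin> A}"
    have cov3: "Sol n F B (Suc s) \<subseteq> N \<union> (\<Union>x\<in>P - {v}. Sol n F (insert x B) s)"
    proof
      fix A assume A: "A \<in> Sol n F B (Suc s)"
      then obtain x where x: "x \<in> P" "A \<in> Sol n F (insert x B) s" using cov by blast
      show "A \<in> N \<union> (\<Union>x\<in>P - {v}. Sol n F (insert x B) s)"
      proof (cases "x = v")
        case False thus ?thesis using x by blast
      next
        case True
        show ?thesis
        proof (cases "u \<in> A")
          case False thus ?thesis using x True N_def by blast
        next
          case uA: True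
          have "A \<in> Sol n F (insert u B) s"
            using x(2) uA ins(4)[OF x(1)] ins(4)[OF u(2)] unfolding Sol_def by auto
          thus ?thesis using u(2) uv by blast
        qed
      qed
    qed
    define D where "D = (\<lambda>w. (w, True)) ` V i"
    have D: "D \<in> F" "\<not> sat_clause (insert v B) D"
      using V(1) that unfolding D_def sat_clause_def by auto
    have fvB: "finite (insert v B)" using fB by simp
    have posD: "{x. (x,True)\<in>D} - insert v B = V i" using V(1) that unfolding D_def by auto
    have "N \<subseteq> (\<Union>x\<in>V i - {u}. Sol n F (insert x (insert v B)) s')"
    proof
      fix A assume "A \<in> N"
      hence A: "A \<in> Sol n F (insert v B) (Suc s')" "u \<notin> A" unfolding N_def s' by auto
      then obtain x where x: "x \<in> V i" "A \<in> Sol n F (insert x (insert v B)) s'"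
        using branch[OF D fvB, of n s'] posD by blast
      have "x \<noteq> u" using x(2) A(2) unfolding Sol_def by auto
      thus "A \<in> (\<Union>x\<in>V i - {u}. Sol n F (insert x (insert v B)) s')" using x by blast
    qed
    have fVi: "finite (V i)" using V(1) that assms(3) by (metis card.infinite not_one_le_zero)
    have cVi: "card (V i - {u}) = k - 1" using V(1) that u(1) fVi by simp
    have admv: "adm n F (insert v B) (Suc s')" using ins(3)[OF vP] s' by simp
    have vBn: "insert v B \<subseteq> {0..<n}" using ins(2)[OF vP] .
    have "card N \<le> card (\<Union>x\<in>V i - {u}. Sol n F (insert x (insert v B)) s')"
      using \<open>N \<subseteq> _\<close> fVi finite_Sol by (intro card_mono) auto
    also have "\<dots> \<le> (\<Sum>x\<in>V i - {u}. card (Sol n F (insert x (insert v B)) s'))"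
      using fVi by (intro card_UN_le) auto
    also have "\<dots> \<le> (\<Sum>x\<in>V i - {u}. k ^ s')"
    proof (rule sum_mono)
      fix x assume xV: "x \<in> V i - {u}"
      have xn: "x \<notin> insert v B" using xV V(1) that by auto
      have "x < n" using xV V(1) that assms(1) unfolding cnf_on_def by fastforce
      hence "insert x (insert v B) \<subseteq> {0..<n}" using vBn by auto
      thus "card (Sol n F (insert x (insert v B)) s') \<le> k ^ s'"
        using bound[OF assms(1,2)] adm_step[OF admv xn fvB] by blast
    qed
    also have "\<dots> = (k - 1) * k ^ s'" using cVi by simp
    finally have cN: "card N \<le> (k - 1) * k ^ s'" .
    have fN: "finite N" unfolding N_def using finite_Sol by auto
    have "k ^ Suc s \<le> card (N \<union> (\<Union>x\<in>P - {v}. Sol n F (insert x B) s))"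
      using fU fN by (intro card_mono_eq[OF _ cov3 Suc.prems(3)]) auto
    also have "\<dots> \<le> card N + card (\<Union>x\<in>P - {v}. Sol n F (insert x B) s)"
      by (rule card_Un_le)
    finally have le: "k ^ Suc s \<le> (k - 1) * k ^ s' + (k - 1) * k ^ s" using cN rest by linarith
    obtain j where j: "k = Suc j" using assms(3) by (cases k) auto
    have "k ^ s' > 0" using assms(3) by simp
    from arith_aux[OF this, of j] le show False unfolding j s' by simp
  qed
  define V' where "V' = (\<lambda>i. if i = 0 then P else V (i - 1))"
  show ?case
  proof (intro exI[of _ V'] conjI allI impI)
    fix i assume i: "i < Suc s"
    show "card (V' i) = k" using i V(1) cP unfolding V'_def by auto
    show "(\<lambda>v. (v, True)) ` V' i \<in> F" using i V(1) CP C(1) unfolding V'_def by auto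
    show "V' i \<inter> B = {}" using i V(1) PB unfolding V'_def by auto
  next
    fix i j assume "i < Suc s" "j < Suc s" "i \<noteq> j"
    thus "V' i \<inter> V' j = {}" using V(2) VP unfolding V'_def
      by (cases i; cases j) auto
  qed
qed

lemma divk: "x < (k::nat) \<Longrightarrow> (k * i + x) div k = i"
  by simp

lemma Sol_empty: "Sol n F {} t = sat_w n t F"
  unfolding Sol_def sat_w_def by auto

lemma adm_empty: "adm n F {} t = admissible n t F"
  unfolding adm_def admissible_def by auto

definition blk :: "nat \<Rightarrow> nat \<Rightarrow> nat set" where
  "blk k i = {k*i..<k*i+k}"

definition F0 :: "nat \<Rightarrow> nat \<Rightarrow> cnf" where
  "F0 k t = (\<lambda>i. (\<lambda>v. (v,True)) ` blk k i) ` {..<t}"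

lemma blk_div: "x \<in> blk k i \<Longrightarrow> x div k = i"
  unfolding blk_def
  by (metis atLeastLessThan_iff add_diff_inverse_nat add_less_cancel_left divk not_less)

lemma F0_props:
  assumes "k \<ge> 1" "n \<ge> k * t"
  shows "cnf_on n (F0 k t)" "is_kcnf k (F0 k t)" "admissible n t (F0 k t)"
proof -
  have bn: "x < n" if "x \<in> blk k i" "i < t" for x i
  proof -
    have "x < k*i + k" using that unfolding blk_def by auto
    also have "k*i + k = k * Suc i" by simp
    also have "\<dots> \<le> k * t" using that(2) by (intro mult_le_mono2) simp
    finally show ?thesis using assms(2) by simp
  qed
  show "cnf_on n (F0 k t)" unfolding cnf_on_def F0_def using bn by (auto simp: blk_def)
  have "card ((\<lambda>v. (v,True)) ` blk k i) = k" for i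
    by (subst card_image) (auto simp: inj_on_def blk_def)
  thus "is_kcnf k (F0 k t)" unfolding is_kcnf_def F0_def by auto
  show "admissible n t (F0 k t)" unfolding admissible_def
  proof (intro allI impI notI)
    fix A assume A: "A \<subseteq> {0..<n} \<and> card A < t" and sA: "sat_cnf A (F0 k t)"
    have "{..<t} \<subseteq> (\<lambda>a. a div k) ` A"
    proof
      fix i assume i: "i \<in> {..<t}"
      hence "sat_clause A ((\<lambda>v. (v,True)) ` blk k i)" using sA unfolding sat_cnf_def F0_def by auto
      then obtain a where "a \<in> A" "a \<in> blk k i" unfolding sat_clause_def by auto
      thus "i \<in> (\<lambda>a. a div k) ` A" using blk_div by force
    qed
    moreover have "finite A" using A finite_subset by blast
    ultimately have "t \<le> card A" using card_image_le card_mono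
      by (metis card_lessThan finite_imageI le_trans)
    thus False using A by simp
  qed
qed

lemma F0_count:
  assumes "k \<ge> 1" "n \<ge> k * t"
  shows "k ^ t \<le> card (sat_w n t (F0 k t))"
proof -
  define G where "G = (\<lambda>f. (\<lambda>i. k*i + f i) ` {..<t})"
  define PI where "PI = PiE {..<t} (\<lambda>_. {..<k})"
  have cPI: "card PI = k ^ t" unfolding PI_def by (simp add: card_PiE)
  have injf: "inj_on (\<lambda>i. k*i + f i) {..<t}" if "f \<in> PI" for f
  proof (rule inj_onI)
    fix i j assume "i \<in> {..<t}" "j \<in> {..<t}" "k*i + f i = k*j + f j"
    moreover have "f i < k" "f j < k" using that \<open>i \<in> _\<close> \<open>j \<in> _\<close> unfolding PI_def by auto
    ultimately show "i = j" using divk by metis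
  qed
  have "inj_on G PI"
  proof (rule inj_onI)
    fix f g assume f: "f \<in> PI" and g: "g \<in> PI" and eq: "G f = G g"
    show "f = g"
    proof (rule PiE_ext[OF f[unfolded PI_def] g[unfolded PI_def]])
      fix i assume i: "i \<in> {..<t}"
      have "k*i + f i \<in> G g" using eq i unfolding G_def by auto
      then obtain j where j: "j < t" "k*i + f i = k*j + g j" unfolding G_def by auto
      have fi: "f i < k" "g j < k" using f g i j(1) unfolding PI_def by auto
      have "i = j" using j(2) fi divk by metis
      thus "f i = g i" using j(2) by simp
    qed
  qed
  moreover have "G ` PI \<subseteq> sat_w n t (F0 k t)"
  proof
    fix X assume "X \<in> G ` PI"
    then obtain f where f: "f \<in> PI" "X = G f" by auto
    have fk: "f i < k" if "i < t" for i using f(1) that unfolding PI_def by auto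
    have "k*i + f i < n" if "i < t" for i
    proof -
      have "k*i + f i < k * Suc i" using fk[OF that] by simp
      also have "\<dots> \<le> k * t" using that by (intro mult_le_mono2) simp
      finally show ?thesis using assms(2) by simp
    qed
    hence "X \<subseteq> {0..<n}" unfolding f(2) G_def by auto
    moreover have "card X = t" unfolding f(2) G_def using card_image[OF injf[OF f(1)]] by simp
    moreover have "sat_cnf X (F0 k t)" unfolding sat_cnf_def F0_def
    proof
      fix C assume "C \<in> (\<lambda>i. (\<lambda>v. (v,True)) ` blk k i) ` {..<t}"
      then obtain i where i: "i < t" "C = (\<lambda>v. (v,True)) ` blk k i" by auto
      have "(k*i + f i, True) \<in> C" "k*i + f i \<in> X" using i fk[OF i(1)] unfolding blk_def f(2) G_def by auto
      thus "sat_clause X C" unfolding sat_clause_def by auto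
    qed
    ultimately show "X \<in> sat_w n t (F0 k t)" unfolding sat_w_def by auto
  qed
  moreover have "finite (sat_w n t (F0 k t))" using finite_Sol[of n "F0 k t" "{}" t] Sol_empty by simp
  ultimately have "card PI \<le> card (sat_w n t (F0 k t))"
    by (metis card_image card_mono)
  thus ?thesis using cPI by simp
qed

theorem theorem1:
  fixes n t k :: nat
  assumes "k \<ge> 1" and "n \<ge> k * t"
  shows "S n t k = k ^ t \<and>
    (\<forall>F. cnf_on n F \<and> is_kcnf k F \<and> admissible n t F \<and> card (sat_w n t F) = k ^ t \<longrightarrow>
      (\<exists>V :: nat \<Rightarrow> nat set.
         (\<forall>i<t. card (V i) = k \<and> (\<lambda>v. (v, True)) ` V i \<in> F) \<and>
         (\<forall>i<t. \<forall>j<t. i \<noteq> j \<longrightarrow> V i \<inter> V j = {})))"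
proof
  have ub: "card (sat_w n t F) \<le> k ^ t" if "cnf_on n F" "is_kcnf k F" "admissible n t F" for F
    using bound[OF that(1,2), of "{}" t] that(3) Sol_empty adm_empty by simp
  let ?M = "{card (sat_w n t F) | F. cnf_on n F \<and> is_kcnf k F \<and> admissible n t F}"
  have "?M \<subseteq> {..k^t}" using ub by auto
  hence fM: "finite ?M" using finite_subset by blast
  have "card (sat_w n t (F0 k t)) \<in> ?M" using F0_props[OF assms] by blast
  moreover have "card (sat_w n t (F0 k t)) = k ^ t"
    using F0_count[OF assms] ub F0_props[OF assms] by (meson le_antisym)
  ultimately have "k ^ t \<in> ?M" by simp
  thus "S n t k = k ^ t" unfolding S_def using fM \<open>?M \<subseteq> _\<close>
    by (intro Max_eqI) auto
next
  show "\<forall>F. cnf_on n F \<and> is_kcnf k F \<and> admissible n t F \<and> card (sat_w n t F) = k ^ t \<longrightarrow>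
      (\<exists>V :: nat \<Rightarrow> nat set.
         (\<forall>i<t. card (V i) = k \<and> (\<lambda>v. (v, True)) ` V i \<in> F) \<and>
         (\<forall>i<t. \<forall>j<t. i \<noteq> j \<longrightarrow> V i \<inter> V j = {}))"
  proof (intro allI impI)
    fix F assume H: "cnf_on n F \<and> is_kcnf k F \<and> admissible n t F \<and> card (sat_w n t F) = k ^ t"
    have "\<exists>V :: nat \<Rightarrow> nat set.
         (\<forall>i<t. card (V i) = k \<and> (\<lambda>v. (v, True)) ` V i \<in> F \<and> V i \<inter> {} = {}) \<and>
         (\<forall>i<t. \<forall>j<t. i \<noteq> j \<longrightarrow> V i \<inter> V j = {})"
      using eq_case[of n F k "{}" t] H assms(1) Sol_empty adm_empty by simp
    thus "\<exists>V :: nat \<Rightarrow> nat set.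
         (\<forall>i<t. card (V i) = k \<and> (\<lambda>v. (v, True)) ` V i \<in> F) \<and>
         (\<forall>i<t. \<forall>j<t. i \<noteq> j \<longrightarrow> V i \<inter> V j = {})" by simp
  qed
qed

end
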